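(* Let $p\ge 2$, let $\Sigma^*$ be a $p\times p$ positive definite matrix, $\Omega^*=(\Sigma^* )^{-1}=(\omega^*_{ij})$, $\phi^*_j=1/\omega^*_{jj}$, $B^*_{ij}=\omega^*_{ij}/\omega^*_{jj}$. For $n\ge1$ let $\mathbf X\in\mathbb R^{n\times p}$ have i.i.d.\ rows $\mathcal N_p(0,\Sigma^* )$, $S_n=\frac1n\mathbf X^\top\mathbf X$, and define the relaxed maximum likelihood estimator (with the regression matrix known exactly) $$\hat\phi^{\rm RML}_j=\max\{(S_nB^* )_{jj},\,0\},\qquad j\in[p].$$ Then for every $j\in[p]$ there is a constant $C<\infty$ depending only on $\phi^*_j$ and $\Sigma^*_{jj}$ such that for all $n\ge1$, $$\mathbf E\big[(\hat\phi^{\rm RML}_j-\phi^*_j)^2\big]\ge \frac{(\phi^*_j)^2+\phi^*_j\Sigma^*_{jj}}{n}-\frac{C}{n^{3/2}}.$$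
   Context: $[p]=\{1,\dots,p\}$; $\Sigma^*_{jj}$ is the $j$-th diagonal entry of $\Sigma^*$. *)

theory Defs
  imports "HOL-Probability.Probability"
begin

definition pos_def_mat :: "real^'p^'p \<Rightarrow> bool" where
  "pos_def_mat S \<longleftrightarrow> transpose S = S \<and> (\<forall>x::real^'p. x \<noteq> 0 \<longrightarrow> x \<bullet> (S *v x) > 0)"

definition mvn_density :: "real^'p^'p \<Rightarrow> real^'p \<Rightarrow> real" where
  "mvn_density S x =
     exp (- (x \<bullet> (matrix_inv S *v x)) / 2) / sqrt ((2 * pi) ^ CARD('p) * det S)"

definition prec :: "real^'p^'p \<Rightarrow> real^'p^'p" where
  "prec S = matrix_inv S"

definition phi_star :: "real^'p^'p \<Rightarrow> 'p \<Rightarrow> real" where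
  "phi_star S j = 1 / (prec S $ j $ j)"

definition B_star :: "real^'p^'p \<Rightarrow> real^'p^'p" where
  "B_star S = (\<chi> i j. prec S $ i $ j / prec S $ j $ j)"

text \<open>Sample covariance S_n = (1/n) X^T X, where row i of X is the vector x i.\<close>
definition sample_cov :: "nat \<Rightarrow> (nat \<Rightarrow> real^'p) \<Rightarrow> real^'p^'p" where
  "sample_cov n x = (1 / real n) *\<^sub>R (\<Sum>i<n. (\<chi> a b. x i $ a * x i $ b))"

definition phi_RML :: "real^'p^'p \<Rightarrow> nat \<Rightarrow> (nat \<Rightarrow> real^'p) \<Rightarrow> 'p \<Rightarrow> real" where
  "phi_RML S n x j = max ((sample_cov n x ** B_star S) $ j $ j) 0"

end

theory Submission
  imports Defs
begin


lemma powser_unique_real: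
  fixes a b :: "nat \<Rightarrow> real"
  assumes A: "\<And>x. (\<lambda>n. a n * x ^ n) sums F x"
      and B: "\<And>x. (\<lambda>n. b n * x ^ n) sums F x"
  shows "a = b"
proof -
  define c where "c n = a n - b n" for n
  have C: "(\<lambda>n. c n * x ^ n) sums 0" for x
    using sums_diff[OF A[of x] B[of x]] by (simp add: c_def algebra_simps)
  have "c m = 0" for m
  proof (induction m rule: less_induct)
    case (less m)
    have S: "(\<lambda>n. c (n + m) * x ^ n) sums 0" if "x \<noteq> 0" for x
    proof -
      have "(\<lambda>n. c (n + m) * x ^ (n + m)) sums 0"
      proof -
        have "(\<lambda>n. c (n + m) * x ^ (n + m)) sums (0 - (\<Sum>n<m. c n * x ^ n))"
          using sums_split_initial_segment[OF C[of x], of m] by simp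
        moreover have "(\<Sum>n<m. c n * x ^ n) = 0" using less by simp
        ultimately show ?thesis by simp
      qed
      then have "(\<lambda>n. (c (n + m) * x ^ (n + m)) / x ^ m) sums (0 / x ^ m)"
        by (rule sums_divide)
      then show ?thesis using that by (simp add: power_add)
    qed
    have "((\<lambda>x::real. 0::real) \<longlongrightarrow> c (0 + m)) (at 0)"
      using powser_limit_0_strong[of 1 "\<lambda>n. c (n+m)" "\<lambda>x::real. 0::real"] S by simp
    then show ?case by (simp add: tendsto_const_iff)
  qed
  then show ?thesis by (auto simp: c_def fun_eq_iff)
qed

lemma cosh_ennreal: "ennreal (cosh x) = ennreal (1/2) * (ennreal (exp x) + ennreal (exp (- x)))"
proof -
  have "ennreal (1/2) * (ennreal (exp x) + ennreal (exp (-x))) = ennreal (1/2) * ennreal (exp x + exp (-x))"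
    by (subst ennreal_plus) auto
  also have "\<dots> = ennreal (1/2 * (exp x + exp (-x)))"
    by (subst ennreal_mult) auto
  also have "\<dots> = ennreal (cosh x)" by (simp add: cosh_field_def)
  finally show ?thesis by simp
qed

lemma half_double: "y \<ge> 0 \<Longrightarrow> ennreal (1/2) * (ennreal y + ennreal y) = ennreal y"
proof -
  assume "y \<ge> 0"
  then have "ennreal (1/2) * (ennreal y + ennreal y) = ennreal (1/2) * ennreal (y + y)"
    by (subst ennreal_plus) auto
  also have "\<dots> = ennreal (1/2 * (y + y))" using \<open>y \<ge> 0\<close>
    by (subst ennreal_mult) auto
  finally show ?thesis by simp
qed

lemma mgf_even_moments:
  fixes W :: "'a \<Rightarrow> real"
  assumes P: "prob_space M" and Wm[measurable]: "W \<in> borel_measurable M" and s: "s \<ge> 0"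
  and mgf: "\<And>t. (\<integral>\<^sup>+\<omega>. ennreal (exp (t * W \<omega>)) \<partial>M) = ennreal (exp (t^2 * s / 2))"
  shows "integrable M (\<lambda>\<omega>. W \<omega> ^ (2*k)) \<and>
         integral\<^sup>L M (\<lambda>\<omega>. W \<omega> ^ (2*k)) = fact (2*k) / (2^k * fact k) * s^k"
proof -
  interpret prob_space M by (rule P)
  define c where "c t n = (if even n then t^n / fact n else 0)" for t :: real and n :: nat
  have c_nn: "c t n \<ge> 0" for t n by (auto simp: c_def)
  define \<mu> where "\<mu> n = (\<integral>\<^sup>+\<omega>. ennreal (W \<omega> ^ n) \<partial>M)" for n
  have cosh: "(\<integral>\<^sup>+\<omega>. ennreal (cosh (t * W \<omega>)) \<partial>M) = ennreal (exp (t^2 * s / 2))" for t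
  proof -
    have "(\<integral>\<^sup>+\<omega>. ennreal (cosh (t * W \<omega>)) \<partial>M)
        = (\<integral>\<^sup>+\<omega>. ennreal (1/2) * (ennreal (exp (t * W \<omega>)) + ennreal (exp ((-t) * W \<omega>))) \<partial>M)"
      by (intro nn_integral_cong) (simp add: cosh_ennreal[of "t * W _"])
    also have "\<dots> = ennreal (1/2) * ((\<integral>\<^sup>+\<omega>. ennreal (exp (t * W \<omega>)) \<partial>M) + (\<integral>\<^sup>+\<omega>. ennreal (exp ((-t) * W \<omega>)) \<partial>M))"
      by (simp add: nn_integral_cmult nn_integral_add)
    also have "\<dots> = ennreal (1/2) * (ennreal (exp (t^2 * s / 2)) + ennreal (exp (t^2 * s / 2)))"
      using mgf[of t] mgf[of "-t"] by simp
    also have "\<dots> = ennreal (exp (t^2 * s / 2))"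
      by (rule half_double) simp
    finally show ?thesis .
  qed
  have ser: "(\<Sum>n. ennreal (c t n) * \<mu> n) = ennreal (exp (t^2 * s / 2))" for t
  proof -
    have "ennreal (cosh (t * W \<omega>)) = (\<Sum>n. ennreal (c t n * W \<omega> ^ n))" for \<omega>
    proof -
      have "(\<lambda>n. c t n * W \<omega> ^ n) sums cosh (t * W \<omega>)"
      proof -
        have "(\<lambda>n. c t n * W \<omega> ^ n) = (\<lambda>n. if even n then (t * W \<omega>) ^ n /\<^sub>R fact n else 0)"
          by (auto simp: fun_eq_iff c_def power_mult_distrib divide_inverse)
        then show ?thesis using cosh_converges[of "t * W \<omega>"] by simp
      qed
      moreover have "c t n * W \<omega> ^ n \<ge> 0" for n by (auto simp: c_def)
      ultimately show ?thesis by (intro suminf_ennreal_eq[symmetric])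
    qed
    then have "ennreal (exp (t^2 * s / 2)) = (\<integral>\<^sup>+\<omega>. (\<Sum>n. ennreal (c t n * W \<omega> ^ n)) \<partial>M)"
      using cosh[of t] by simp
    also have "\<dots> = (\<Sum>n. \<integral>\<^sup>+\<omega>. ennreal (c t n * W \<omega> ^ n) \<partial>M)"
      by (rule nn_integral_suminf) measurable
    also have "\<dots> = (\<Sum>n. ennreal (c t n) * \<mu> n)"
    proof (intro suminf_cong)
      fix n
      show "(\<integral>\<^sup>+\<omega>. ennreal (c t n * W \<omega> ^ n) \<partial>M) = ennreal (c t n) * \<mu> n"
      proof (cases "even n")
        case True
        then have "ennreal (c t n * W \<omega> ^ n) = ennreal (c t n) * ennreal (W \<omega> ^ n)" for \<omega>
          by (intro ennreal_mult) (auto simp: c_def zero_le_even_power)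
        then show ?thesis by (simp add: \<mu>_def nn_integral_cmult)
      qed (simp add: c_def)
    qed
    finally show ?thesis by simp
  qed
  have fin: "\<mu> n < top" if "even n" for n
  proof -
    have "ennreal (c 1 n) * \<mu> n \<le> (\<Sum>n. ennreal (c 1 n) * \<mu> n)"
      using sum_le_suminf[OF summableI, of "{n}" "\<lambda>n. ennreal (c 1 n) * \<mu> n"] by simp
    also have "\<dots> < top" by (simp add: ser)
    finally have "ennreal (c 1 n) * \<mu> n < top" .
    moreover have "c 1 n > 0" using that by (simp add: c_def)
    ultimately show ?thesis
      by (auto simp: ennreal_mult_less_top)
  qed
  define m where "m n = integral\<^sup>L M (\<lambda>\<omega>. W \<omega> ^ n)" for n
  have integ: "integrable M (\<lambda>\<omega>. W \<omega> ^ n)" and mu: "\<mu> n = ennreal (m n)" and m_nn: "m n \<ge> 0"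
    if "even n" for n
  proof -
    from fin[OF that] obtain r where r: "\<mu> n = ennreal r" "r \<ge> 0"
      by (cases "\<mu> n" rule: ennreal_cases) auto
    show I: "integrable M (\<lambda>\<omega>. W \<omega> ^ n)"
      by (rule integrableI_nn_integral_finite[where x=r]) (use r that in \<open>auto simp: \<mu>_def zero_le_even_power\<close>)
    show "\<mu> n = ennreal (m n)" unfolding \<mu>_def m_def
      by (rule nn_integral_eq_integral[OF I]) (use that in \<open>auto simp: zero_le_even_power\<close>)
    show "m n \<ge> 0" unfolding m_def
      by (rule integral_nonneg_AE) (use that in \<open>auto simp: zero_le_even_power\<close>)
  qed
  define a where "a n = (if even n then m n / fact n else 0)" for n
  define b where "b n = (if even n then (s/2) ^ (n div 2) / fact (n div 2) else 0)" for n
  have A: "(\<lambda>n. a n * t ^ n) sums exp (t^2 * s / 2)" for t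
  proof -
    have eq: "ennreal (c t n) * \<mu> n = ennreal (a n * t ^ n)" for n
      by (cases "even n") (auto simp: c_def a_def mu m_nn ennreal_mult[symmetric] zero_le_even_power mult_ac)
    have nn: "a n * t ^ n \<ge> 0" for n
      by (cases "even n") (auto simp: a_def m_nn zero_le_even_power)
    have "(\<lambda>n. ennreal (a n * t ^ n)) sums ennreal (exp (t^2 * s / 2))"
      using summable_sums[OF summableI, of "\<lambda>n. ennreal (c t n) * \<mu> n"] ser[of t] by (simp add: eq)
    then show ?thesis using nn by simp
  qed
  have B: "(\<lambda>n. b n * t ^ n) sums exp (t^2 * s / 2)" for t
  proof -
    have eq: "b (2*k) * t ^ (2*k) = (t^2 * s / 2) ^ k /\<^sub>R fact k" for k
    proof -
      have "t ^ (2*k) = (t^2)^k" by (simp add: power_mult)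
      moreover have "(t^2 * s / 2) ^ k = (t^2)^k * (s/2)^k"
        by (simp add: power_mult_distrib power_divide)
      ultimately show ?thesis by (simp add: b_def power_divide field_simps)
    qed
    have "(\<lambda>k. b (2*k) * t ^ (2*k)) sums exp (t^2 * s / 2)"
      unfolding eq by (rule exp_converges)
    then show ?thesis
      by (subst (asm) sums_mono_reindex[of "\<lambda>k. 2*k"]) (auto simp: strict_mono_def b_def)
  qed
  have "a = b" by (rule powser_unique_real[OF A B])
  then have "a (2*k) = b (2*k)" by simp
  then have "m (2*k) = fact (2*k) * (s/2)^k / fact k" by (simp add: a_def b_def field_simps)
  then show ?thesis using integ[of "2*k"] by (simp add: m_def power_divide)
qed



lemma posdef_facts:
  fixes S :: "real^'p^'p"
  assumes "pos_def_mat S"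
  shows "S ** matrix_inv S = mat 1" "matrix_inv S ** S = mat 1"
    "transpose (matrix_inv S) = matrix_inv S" "transpose S = S"
proof -
  have T: "transpose S = S" using assms by (simp add: pos_def_mat_def)
  have "\<forall>x. S *v x = 0 \<longrightarrow> x = 0"
  proof (intro allI impI)
    fix x :: "real^'p" assume "S *v x = 0"
    then show "x = 0" using assms unfolding pos_def_mat_def
      by (metis inner_zero_right less_irrefl)
  qed
  then have "invertible S" using matrix_left_invertible_ker invertible_left_inverse by blast
  then have "\<exists>A'. S ** A' = mat 1 \<and> A' ** S = mat 1" by (simp add: invertible_def)
  then have I: "S ** matrix_inv S = mat 1 \<and> matrix_inv S ** S = mat 1"
    unfolding matrix_inv_def by (rule someI_ex)
  then show "S ** matrix_inv S = mat 1" "matrix_inv S ** S = mat 1" by auto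
  show "transpose S = S" by (rule T)
  have "transpose (matrix_inv S) ** S = mat 1"
    using arg_cong[OF conjunct1[OF I], of transpose] by (simp add: matrix_transpose_mul T)
  then have "transpose (matrix_inv S) = transpose (matrix_inv S) ** (S ** matrix_inv S)"
    using I by (simp add: matrix_mul_rid)
  also have "\<dots> = matrix_inv S"
    by (simp add: matrix_mul_assoc \<open>transpose (matrix_inv S) ** S = mat 1\<close> matrix_mul_lid)
  finally show "transpose (matrix_inv S) = matrix_inv S" .
qed

lemma inner_sym:
  fixes A :: "real^'p^'p"
  assumes "transpose A = A"
  shows "x \<bullet> (A *v y) = y \<bullet> (A *v x)"
proof -
  have "x \<bullet> (A *v y) = (x v* A) \<bullet> y" by (simp add: dot_lmul_matrix)
  also have "x v* A = transpose A *v x" by simp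
  finally show ?thesis using assms by (simp add: inner_commute)
qed

lemma mvn_cont: "continuous_on UNIV (mvn_density S)"
  unfolding mvn_density_def divide_inverse[of "exp _"]
  by (intro continuous_intros linear_continuous_on matrix_vector_mul_linear) auto

lemma mvn_meas[measurable]: "mvn_density S \<in> borel_measurable borel"
  by (rule borel_measurable_continuous_onI[OF mvn_cont])



lemma mvn_shift:
  fixes S :: "real^'p^'p"
  assumes "pos_def_mat S"
  shows "mvn_density S x * exp (t * (a \<bullet> x))
       = mvn_density S (x - t *\<^sub>R (S *v a)) * exp (t^2 * (a \<bullet> (S *v a)) / 2)"
proof -
  note F = posdef_facts[OF assms]
  define \<Omega> where "\<Omega> = matrix_inv S"
  define v where "v = t *\<^sub>R (S *v a)"
  have Ov: "\<Omega> *v v = t *\<^sub>R a"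
    by (simp add: v_def \<Omega>_def matrix_vector_mult_scaleR matrix_vector_mul_assoc F)
  have vOx: "v \<bullet> (\<Omega> *v x) = t * (a \<bullet> x)"
  proof -
    have "v \<bullet> (\<Omega> *v x) = x \<bullet> (\<Omega> *v v)"
      using inner_sym[of \<Omega> v x] F(3) unfolding \<Omega>_def by simp
    also have "\<dots> = t * (a \<bullet> x)" by (simp add: Ov inner_commute)
    finally show ?thesis .
  qed
  have va: "v \<bullet> a = t * (a \<bullet> (S *v a))" by (simp add: v_def inner_commute)
  have Ox: "\<Omega> *v (x - v) = \<Omega> *v x - t *\<^sub>R a"
    by (simp add: matrix_vector_mult_diff_distrib Ov)
  have Q: "(x - v) \<bullet> (\<Omega> *v (x - v)) = x \<bullet> (\<Omega> *v x) - 2 * t * (a \<bullet> x) + t^2 * (a \<bullet> (S *v a))"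
    unfolding Ox inner_diff_left inner_diff_right inner_scaleR_right vOx va
    by (simp add: power2_eq_square algebra_simps inner_commute[of x a])
  define q where "q = x \<bullet> (\<Omega> *v x)"
  define \<sigma> where "\<sigma> = a \<bullet> (S *v a)"
  have E: "exp (- q / 2) * exp (t * (a \<bullet> x)) = exp (- (q - 2 * t * (a \<bullet> x) + t^2 * \<sigma>) / 2) * exp (t^2 * \<sigma> / 2)"
  proof -
    have "- q / 2 + t * (a \<bullet> x) = - (q - 2 * t * (a \<bullet> x) + t^2 * \<sigma>) / 2 + t^2 * \<sigma> / 2"
      by (simp add: algebra_simps add_divide_distrib diff_divide_distrib)
    then show ?thesis unfolding mult_exp_exp by simp
  qed
  show ?thesis
    unfolding mvn_density_def \<Omega>_def[symmetric] v_def[symmetric] Q q_def[symmetric] \<sigma>_def[symmetric]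
      times_divide_eq_left E by (rule refl)
qed

lemma nn_integral_lborel_shift:
  fixes f :: "'b::euclidean_space \<Rightarrow> ennreal"
  assumes [measurable]: "f \<in> borel_measurable borel"
  shows "(\<integral>\<^sup>+x. f (x - c) \<partial>lborel) = (\<integral>\<^sup>+x. f x \<partial>lborel)"
proof -
  have "(\<integral>\<^sup>+x. f x \<partial>lborel) = (\<integral>\<^sup>+x. f x \<partial>(distr lborel borel ((+) (-c))))"
    by (simp add: lborel_distr_plus)
  also have "\<dots> = (\<integral>\<^sup>+x. f (-c + x) \<partial>lborel)"
    by (rule nn_integral_distr) auto
  finally show ?thesis by simp
qed

lemma mvn_mgf:
  fixes S :: "real^'p^'p"
  assumes P: "pos_def_mat S" and one: "(\<integral>\<^sup>+x. ennreal (mvn_density S x) \<partial>lborel) = 1"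
  shows "(\<integral>\<^sup>+x. ennreal (mvn_density S x) * ennreal (exp (t * (a \<bullet> x))) \<partial>lborel)
         = ennreal (exp (t^2 * (a \<bullet> (S *v a)) / 2))"
proof -
  define v where "v = t *\<^sub>R (S *v a)"
  define E where "E = exp (t^2 * (a \<bullet> (S *v a)) / 2)"
  have "(\<integral>\<^sup>+x. ennreal (mvn_density S x) * ennreal (exp (t * (a \<bullet> x))) \<partial>lborel)
      = (\<integral>\<^sup>+x. ennreal (mvn_density S (x - v)) * ennreal E \<partial>lborel)"
  proof (intro nn_integral_cong)
    fix x
    have "ennreal (mvn_density S x) * ennreal (exp (t * (a \<bullet> x))) = ennreal (mvn_density S x * exp (t * (a \<bullet> x)))"
      by (simp add: ennreal_mult'')
    also have "\<dots> = ennreal (mvn_density S (x - v) * E)"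
      by (simp add: mvn_shift[OF P] v_def E_def)
    also have "\<dots> = ennreal (mvn_density S (x - v)) * ennreal E"
      by (simp add: ennreal_mult'' E_def)
    finally show "ennreal (mvn_density S x) * ennreal (exp (t * (a \<bullet> x))) = ennreal (mvn_density S (x - v)) * ennreal E" .
  qed
  also have "\<dots> = (\<integral>\<^sup>+x. ennreal (mvn_density S (x - v)) \<partial>lborel) * ennreal E"
    by (rule nn_integral_multc) measurable
  also have "(\<integral>\<^sup>+x. ennreal (mvn_density S (x - v)) \<partial>lborel) = 1"
    using nn_integral_lborel_shift[of "\<lambda>x. ennreal (mvn_density S x)" v] one by simp
  finally show ?thesis by (simp add: E_def)
qed



lemma mvn_total:
  assumes P: "prob_space M" and D: "distributed M lborel X (\<lambda>x. ennreal (mvn_density S x))"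
  shows "(\<integral>\<^sup>+x. ennreal (mvn_density S x) \<partial>lborel) = 1"
proof -
  interpret prob_space M by (rule P)
  have "emeasure M (X -` UNIV \<inter> space M) = (\<integral>\<^sup>+x. ennreal (mvn_density S x) * indicator UNIV x \<partial>lborel)"
    by (rule distributed_emeasure[OF D]) simp
  then show ?thesis by (simp add: emeasure_space_1)
qed

lemma gauss_moment:
  fixes S :: "real^'p^'p" and X :: "'a \<Rightarrow> real^'p"
  assumes S: "pos_def_mat S" and P: "prob_space M"
    and D: "distributed M lborel X (\<lambda>x. ennreal (mvn_density S x))"
  shows "integrable M (\<lambda>\<omega>. (a \<bullet> X \<omega>) ^ (2*k)) \<and>
         integral\<^sup>L M (\<lambda>\<omega>. (a \<bullet> X \<omega>) ^ (2*k)) = fact (2*k) / (2^k * fact k) * (a \<bullet> (S *v a))^k"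
proof (rule mgf_even_moments[OF P])
  have Xm[measurable]: "X \<in> borel_measurable M"
    using distributed_measurable[OF D] by simp
  show "(\<lambda>\<omega>. a \<bullet> X \<omega>) \<in> borel_measurable M" by measurable
  show "0 \<le> a \<bullet> (S *v a)"
  proof (cases "a = 0")
    case False then show ?thesis using S unfolding pos_def_mat_def by (simp add: less_imp_le)
  qed simp
  fix t :: real
  have "(\<integral>\<^sup>+\<omega>. ennreal (exp (t * (a \<bullet> X \<omega>))) \<partial>M)
      = (\<integral>\<^sup>+x. ennreal (mvn_density S x) * ennreal (exp (t * (a \<bullet> x))) \<partial>lborel)"
    by (rule distributed_nn_integral[OF D, symmetric]) measurable
  also have "\<dots> = ennreal (exp (t^2 * (a \<bullet> (S *v a)) / 2))"
    by (rule mvn_mgf[OF S mvn_total[OF P D]])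
  finally show "(\<integral>\<^sup>+\<omega>. ennreal (exp (t * (a \<bullet> X \<omega>))) \<partial>M) = ennreal (exp (t^2 * (a \<bullet> (S *v a)) / 2))" .
qed



lemma vec_facts:
  fixes S :: "real^'p^'p" and j :: 'p
  assumes S: "pos_def_mat S"
  defines "\<omega> \<equiv> prec S $ j $ j" and "e \<equiv> axis j (1::real)"
      and "b \<equiv> (\<chi> k. prec S $ k $ j / prec S $ j $ j)"
  shows "\<omega> > 0" "phi_star S j = 1 / \<omega>" "S *v b = (1/\<omega>) *\<^sub>R e"
    "e \<bullet> (S *v e) = S $ j $ j" "b \<bullet> (S *v b) = phi_star S j"
    "(e + b) \<bullet> (S *v (e + b)) = S $ j $ j + 3 * phi_star S j"
    "(e - b) \<bullet> (S *v (e - b)) = S $ j $ j - phi_star S j"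
proof -
  note F = posdef_facts[OF S]
  define \<Omega> where "\<Omega> = matrix_inv S"
  have pe: "prec S = \<Omega>" by (simp add: prec_def \<Omega>_def)
  define u where "u = \<Omega> *v e"
  have Su: "S *v u = e" by (simp add: u_def \<Omega>_def matrix_vector_mul_assoc F)
  have e0: "e \<noteq> 0" by (simp add: e_def axis_eq_0_iff)
  have u0: "u \<noteq> 0" using Su e0 by auto
  have "\<omega> = e \<bullet> u"
    by (simp add: \<omega>_def pe u_def e_def inner_axis' matrix_vector_mult_basis column_def)
  also have "\<dots> = u \<bullet> (S *v u)" by (simp add: Su inner_commute)
  also have "\<dots> > 0" using S u0 unfolding pos_def_mat_def by blast
  finally show wpos: "\<omega> > 0" .
  show phi: "phi_star S j = 1 / \<omega>" by (simp add: phi_star_def \<omega>_def)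
  show Sb: "S *v b = (1/\<omega>) *\<^sub>R e"
  proof -
    have "(S *v b) $ i = ((1/\<omega>) *\<^sub>R e) $ i" for i
    proof -
      have "(S *v b) $ i = (\<Sum>k\<in>UNIV. S $ i $ k * \<Omega> $ k $ j) / \<omega>"
        by (simp add: matrix_vector_mult_def b_def pe \<omega>_def sum_divide_distrib)
      also have "(\<Sum>k\<in>UNIV. S $ i $ k * \<Omega> $ k $ j) = (S ** \<Omega>) $ i $ j"
        by (simp add: matrix_matrix_mult_def)
      also have "\<dots> = (if i = j then 1 else 0)" by (simp add: \<Omega>_def F mat_def)
      finally show ?thesis by (simp add: e_def axis_def)
    qed
    then show ?thesis by (simp add: vec_eq_iff)
  qed
  have bj: "b $ j = 1" using wpos by (simp add: b_def pe \<omega>_def)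
  show See: "e \<bullet> (S *v e) = S $ j $ j"
    by (simp add: e_def inner_axis' matrix_vector_mult_basis column_def)
  show Sbb: "b \<bullet> (S *v b) = phi_star S j"
    by (simp add: Sb phi e_def inner_axis bj)
  have eSb: "e \<bullet> (S *v b) = phi_star S j" by (simp add: Sb phi e_def)
  have bSe: "b \<bullet> (S *v e) = phi_star S j"
    using inner_sym[OF F(4), of b e] eSb by simp
  show "(e + b) \<bullet> (S *v (e + b)) = S $ j $ j + 3 * phi_star S j"
    by (simp add: matrix_vector_right_distrib inner_add_left inner_add_right See Sbb eSb bSe)
  show "(e - b) \<bullet> (S *v (e - b)) = S $ j $ j - phi_star S j"
    by (simp add: matrix_vector_mult_diff_distrib inner_diff_left inner_diff_right See Sbb eSb bSe)
qed



lemma abs_pow_le: "\<bar>x::real\<bar> ^ k \<le> 1 + x ^ 4" if "k \<le> 4"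
proof (cases "\<bar>x\<bar> \<le> 1")
  case True
  then have "\<bar>x\<bar> ^ k \<le> 1" by (simp add: power_le_one)
  moreover have "x ^ 4 \<ge> 0" by (simp add: zero_le_even_power)
  ultimately show ?thesis by linarith
next
  case False
  then have "\<bar>x\<bar> ^ k \<le> \<bar>x\<bar> ^ 4" using that by (intro power_increasing) auto
  also have "\<dots> = x ^ 4" by (simp add: power_abs[symmetric] zero_le_even_power)
  finally show ?thesis by simp
qed

context prob_space
begin

lemma integrable_pow_le:
  fixes f :: "'a \<Rightarrow> real"
  assumes [measurable]: "f \<in> borel_measurable M" and I: "integrable M (\<lambda>\<omega>. f \<omega> ^ 4)" and k: "k \<le> 4"
  shows "integrable M (\<lambda>\<omega>. f \<omega> ^ k)"
proof (rule Bochner_Integration.integrable_bound)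
  show "integrable M (\<lambda>\<omega>. 1 + f \<omega> ^ 4)" using I by simp
  show "(\<lambda>\<omega>. f \<omega> ^ k) \<in> borel_measurable M" by measurable
  show "AE \<omega> in M. norm (f \<omega> ^ k) \<le> norm (1 + f \<omega> ^ 4)"
    using abs_pow_le[OF k] by (simp add: power_abs zero_le_even_power add_nonneg_nonneg)
qed

lemma indep_pow_prod:
  fixes A B :: "'a \<Rightarrow> real"
  assumes ind: "indep_var borel A borel B"
    and IA: "integrable M (\<lambda>\<omega>. A \<omega> ^ 4)" and IB: "integrable M (\<lambda>\<omega>. B \<omega> ^ 4)"
    and a: "a \<le> 4" and b: "b \<le> 4"
  shows "integrable M (\<lambda>\<omega>. A \<omega> ^ a * B \<omega> ^ b)"
    "integral\<^sup>L M (\<lambda>\<omega>. A \<omega> ^ a * B \<omega> ^ b) = integral\<^sup>L M (\<lambda>\<omega>. A \<omega> ^ a) * integral\<^sup>L M (\<lambda>\<omega>. B \<omega> ^ b)"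
proof -
  have Am[measurable]: "A \<in> borel_measurable M" and Bm[measurable]: "B \<in> borel_measurable M"
    using indep_var_rv1[OF ind] indep_var_rv2[OF ind] by auto
  have "indep_var borel ((\<lambda>x. x ^ a) \<circ> A) borel ((\<lambda>x. x ^ b) \<circ> B)"
    by (rule indep_var_compose[OF ind]) measurable
  then have I: "indep_var borel (\<lambda>\<omega>. A \<omega> ^ a) borel (\<lambda>\<omega>. B \<omega> ^ b)" by (simp add: comp_def)
  have ia: "integrable M (\<lambda>\<omega>. A \<omega> ^ a)" by (rule integrable_pow_le[OF Am IA a])
  have ib: "integrable M (\<lambda>\<omega>. B \<omega> ^ b)" by (rule integrable_pow_le[OF Bm IB b])
  show "integrable M (\<lambda>\<omega>. A \<omega> ^ a * B \<omega> ^ b)" by (rule indep_var_integrable[OF I ia ib])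
  show "integral\<^sup>L M (\<lambda>\<omega>. A \<omega> ^ a * B \<omega> ^ b) = integral\<^sup>L M (\<lambda>\<omega>. A \<omega> ^ a) * integral\<^sup>L M (\<lambda>\<omega>. B \<omega> ^ b)"
    by (rule indep_var_lebesgue_integral[OF I ia ib])
qed

lemma indep_partial_sum:
  fixes D :: "nat \<Rightarrow> 'a \<Rightarrow> real"
  assumes ind: "indep_vars (\<lambda>_. borel) D {..<n}" and m: "m < n"
  shows "indep_var borel (\<lambda>\<omega>. \<Sum>i<m. D i \<omega>) borel (D m)"
proof -
  have R: "indep_var (PiM {..<m} (\<lambda>_. borel)) (\<lambda>\<omega>. restrict (\<lambda>i. D i \<omega>) {..<m})
      (PiM {m} (\<lambda>_. borel)) (\<lambda>\<omega>. restrict (\<lambda>i. D i \<omega>) {m})"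
    by (rule indep_var_restrict[OF ind]) (use m in auto)
  have "indep_var borel ((\<lambda>f. \<Sum>i<m. f i) \<circ> (\<lambda>\<omega>. restrict (\<lambda>i. D i \<omega>) {..<m}))
      borel ((\<lambda>f. f m) \<circ> (\<lambda>\<omega>. restrict (\<lambda>i. D i \<omega>) {m}))"
    by (rule indep_var_compose[OF R]) measurable
  moreover have "((\<lambda>f. \<Sum>i<m. f i) \<circ> (\<lambda>\<omega>. restrict (\<lambda>i. D i \<omega>) {..<m})) = (\<lambda>\<omega>. \<Sum>i<m. D i \<omega>)"
    by (auto simp: fun_eq_iff intro!: sum.cong)
  moreover have "((\<lambda>f. f m) \<circ> (\<lambda>\<omega>. restrict (\<lambda>i. D i \<omega>) {m})) = D m"
    by (auto simp: fun_eq_iff)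
  ultimately show ?thesis by simp
qed

lemma sum_moments:
  fixes D :: "nat \<Rightarrow> 'a \<Rightarrow> real"
  assumes ind: "indep_vars (\<lambda>_. borel) D {..<n}"
    and I4: "\<And>i. i < n \<Longrightarrow> integrable M (\<lambda>\<omega>. D i \<omega> ^ 4)"
    and E1: "\<And>i. i < n \<Longrightarrow> expectation (D i) = 0"
    and E2: "\<And>i. i < n \<Longrightarrow> expectation (\<lambda>\<omega>. D i \<omega> ^ 2) = V"
    and E4: "\<And>i. i < n \<Longrightarrow> expectation (\<lambda>\<omega>. D i \<omega> ^ 4) \<le> K"
  shows "m \<le> n \<Longrightarrow> integrable M (\<lambda>\<omega>. (\<Sum>i<m. D i \<omega>) ^ 4) \<and>
     expectation (\<lambda>\<omega>. \<Sum>i<m. D i \<omega>) = 0 \<and>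
     expectation (\<lambda>\<omega>. (\<Sum>i<m. D i \<omega>) ^ 2) = m * V \<and>
     expectation (\<lambda>\<omega>. (\<Sum>i<m. D i \<omega>) ^ 4) \<le> m * K + 3 * m^2 * V^2"
proof (induction m)
  case 0
  then show ?case by simp
next
  case (Suc m)
  then have mn: "m < n" by simp
  have Dm[measurable]: "D i \<in> borel_measurable M" if "i < n" for i
    using ind that unfolding indep_vars_def by auto
  define A where "A \<omega> = (\<Sum>i<m. D i \<omega>)" for \<omega>
  define B where "B = D m"
  have Am[measurable]: "A \<in> borel_measurable M"
    unfolding A_def using mn by (intro borel_measurable_sum) (auto intro: Dm)
  have Bm[measurable]: "B \<in> borel_measurable M" using Dm[OF mn] by (simp add: B_def)
  from Suc mn have IH: "integrable M (\<lambda>\<omega>. A \<omega> ^ 4)" "expectation A = 0"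
      "expectation (\<lambda>\<omega>. A \<omega> ^ 2) = m * V" "expectation (\<lambda>\<omega>. A \<omega> ^ 4) \<le> m * K + 3 * m^2 * V^2"
    by (simp_all add: A_def[abs_def])
  have IB: "integrable M (\<lambda>\<omega>. B \<omega> ^ 4)" using I4[OF mn] by (simp add: B_def)
  have EB1: "expectation B = 0" "expectation (\<lambda>\<omega>. B \<omega> ^ 2) = V" "expectation (\<lambda>\<omega>. B \<omega> ^ 4) \<le> K"
    using E1[OF mn] E2[OF mn] E4[OF mn] by (simp_all add: B_def)
  have ind2: "indep_var borel A borel B"
    using indep_partial_sum[OF ind mn] by (simp add: A_def[abs_def] B_def)
  note PP = indep_pow_prod[OF ind2 IH(1) IB]
  have iA: "integrable M (\<lambda>\<omega>. A \<omega> ^ k)" if "k \<le> 4" for k by (rule integrable_pow_le[OF Am IH(1) that])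
  have iB: "integrable M (\<lambda>\<omega>. B \<omega> ^ k)" if "k \<le> 4" for k by (rule integrable_pow_le[OF Bm IB that])
  have iA1: "integrable M A" using iA[of 1] by simp
  have iB1: "integrable M B" using iB[of 1] by simp
  have i31: "integrable M (\<lambda>\<omega>. A \<omega> ^ 3 * B \<omega>)" and e31: "expectation (\<lambda>\<omega>. A \<omega> ^ 3 * B \<omega>) = expectation (\<lambda>\<omega>. A \<omega> ^ 3) * expectation B"
    using PP[of 3 1] by simp_all
  have i22: "integrable M (\<lambda>\<omega>. A \<omega> ^ 2 * B \<omega> ^ 2)" and e22: "expectation (\<lambda>\<omega>. A \<omega> ^ 2 * B \<omega> ^ 2) = expectation (\<lambda>\<omega>. A \<omega> ^ 2) * expectation (\<lambda>\<omega>. B \<omega> ^ 2)"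
    using PP[of 2 2] by simp_all
  have i13: "integrable M (\<lambda>\<omega>. A \<omega> * B \<omega> ^ 3)" and e13: "expectation (\<lambda>\<omega>. A \<omega> * B \<omega> ^ 3) = expectation A * expectation (\<lambda>\<omega>. B \<omega> ^ 3)"
    using PP[of 1 3] by simp_all
  have i11: "integrable M (\<lambda>\<omega>. A \<omega> * B \<omega>)" and e11: "expectation (\<lambda>\<omega>. A \<omega> * B \<omega>) = expectation A * expectation B"
    using PP[of 1 1] by simp_all
  have sumeq: "(\<Sum>i<Suc m. D i \<omega>) = A \<omega> + B \<omega>" for \<omega> by (simp add: A_def B_def)
  have p4: "(A \<omega> + B \<omega>) ^ 4 = A \<omega> ^ 4 + 4 * (A \<omega> ^ 3 * B \<omega>) + 6 * (A \<omega> ^ 2 * B \<omega> ^ 2)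
      + 4 * (A \<omega> * B \<omega> ^ 3) + B \<omega> ^ 4" for \<omega>
    by (simp add: power2_eq_square power3_eq_cube power4_eq_xxxx algebra_simps)
  have p2: "(A \<omega> + B \<omega>) ^ 2 = A \<omega> ^ 2 + 2 * (A \<omega> * B \<omega>) + B \<omega> ^ 2" for \<omega>
    by (simp add: power2_eq_square algebra_simps)
  have I4': "integrable M (\<lambda>\<omega>. (A \<omega> + B \<omega>) ^ 4)"
    unfolding p4 using IH(1) IB i31 i22 i13 by simp
  have E4': "expectation (\<lambda>\<omega>. (A \<omega> + B \<omega>) ^ 4) = expectation (\<lambda>\<omega>. A \<omega> ^ 4) + 6 * (m * V) * V
       + expectation (\<lambda>\<omega>. B \<omega> ^ 4)"
    unfolding p4 using IH(1) IB i31 i22 i13 by (simp add: e31 e22 e13 IH(2,3) EB1)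
  have E2': "expectation (\<lambda>\<omega>. (A \<omega> + B \<omega>) ^ 2) = m * V + V"
    unfolding p2 using iA[of 2] iB[of 2] i11 by (simp add: e11 IH(2,3) EB1)
  have E1': "expectation (\<lambda>\<omega>. A \<omega> + B \<omega>) = 0"
    using iA1 iB1 by (simp add: IH(2) EB1)
  have "expectation (\<lambda>\<omega>. (A \<omega> + B \<omega>) ^ 4) \<le> Suc m * K + 3 * (Suc m)^2 * V^2"
  proof -
    have "expectation (\<lambda>\<omega>. (A \<omega> + B \<omega>) ^ 4) \<le> (m * K + 3 * m^2 * V^2) + 6 * m * V^2 + K"
      using E4' IH(4) EB1(3) by (simp add: power2_eq_square)
    also have "\<dots> \<le> Suc m * K + 3 * (Suc m)^2 * V^2"
      by (simp add: power2_eq_square algebra_simps)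
    finally show ?thesis .
  qed
  then show ?case unfolding sumeq using I4' E2' E1' by (simp add: algebra_simps)
qed

end



lemma max_sq_ineq:
  fixes T \<phi> :: real
  assumes "\<phi> > 0"
  shows "(max T 0 - \<phi>)^2 \<ge> (T - \<phi>)^2 - (T - \<phi>)^4 / \<phi>^2"
proof (cases "T \<ge> 0")
  case True
  have "(T - \<phi>)^4 / \<phi>^2 \<ge> 0" by (simp add: zero_le_even_power)
  then show ?thesis using True by simp
next
  case False
  define d where "d = T - \<phi>"
  have "\<phi> \<le> - d" using False assms unfolding d_def by simp
  then have "\<phi>^2 \<le> (-d)^2" using assms by (intro power_mono) auto
  then have dd: "d^2 \<ge> \<phi>^2" by simp
  have "d^4 / \<phi>^2 = d^2 * (d^2 / \<phi>^2)" by (simp add: power2_eq_square power4_eq_xxxx)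
  also have "\<dots> \<ge> d^2 * 1" using dd assms
    by (intro mult_left_mono) (auto simp: zero_le_even_power)
  finally have "d^4 / \<phi>^2 \<ge> d^2" by simp
  then have "(T - \<phi>)^2 - (T - \<phi>)^4 / \<phi>^2 \<le> 0" by (simp add: d_def)
  moreover have "(max T 0 - \<phi>)^2 = \<phi>^2" using False by simp
  moreover have "\<phi>^2 \<ge> 0" by simp
  ultimately show ?thesis by linarith
qed

lemma sq_sum_le: "((u::real) + v)^2 \<le> 2 * u^2 + 2 * v^2"
proof -
  have "0 \<le> (u - v)^2" by simp
  then show ?thesis by (simp add: power2_eq_square algebra_simps)
qed

context prob_space
begin

lemma final_bound:
  fixes W :: "nat \<Rightarrow> 'a \<Rightarrow> real"
  assumes ind: "indep_vars (\<lambda>_. borel) W {..<n}" and n: "n \<ge> 1" and phi: "\<phi> > 0" and K: "K \<ge> 0"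
    and I4: "\<And>i. i < n \<Longrightarrow> integrable M (\<lambda>\<omega>. (W i \<omega> - \<phi>) ^ 4)"
    and E1: "\<And>i. i < n \<Longrightarrow> expectation (\<lambda>\<omega>. W i \<omega> - \<phi>) = 0"
    and E2: "\<And>i. i < n \<Longrightarrow> expectation (\<lambda>\<omega>. (W i \<omega> - \<phi>) ^ 2) = V"
    and E4: "\<And>i. i < n \<Longrightarrow> expectation (\<lambda>\<omega>. (W i \<omega> - \<phi>) ^ 4) \<le> K"
  shows "expectation (\<lambda>\<omega>. (max ((1 / real n) * (\<Sum>i<n. W i \<omega>)) 0 - \<phi>)^2)
      \<ge> V / n - (K + 3 * V^2) / (\<phi>^2 * real n ^ 2)"
proof -
  define D where "D i \<omega> = W i \<omega> - \<phi>" for i \<omega>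
  have indD: "indep_vars (\<lambda>_. borel) D {..<n}"
    unfolding D_def by (rule indep_vars_compose2[OF ind]) measurable
  have Dm[measurable]: "D i \<in> borel_measurable M" if "i < n" for i
    using indD that unfolding indep_vars_def by auto
  have I4D: "\<And>i. i < n \<Longrightarrow> integrable M (\<lambda>\<omega>. D i \<omega> ^ 4)" using I4 by (simp add: D_def)
  have E1D: "\<And>i. i < n \<Longrightarrow> expectation (D i) = 0" using E1 by (simp add: D_def[abs_def])
  have E2D: "\<And>i. i < n \<Longrightarrow> expectation (\<lambda>\<omega>. D i \<omega> ^ 2) = V" using E2 by (simp add: D_def)
  have E4D: "\<And>i. i < n \<Longrightarrow> expectation (\<lambda>\<omega>. D i \<omega> ^ 4) \<le> K" using E4 by (simp add: D_def)
  note SM = sum_moments[OF indD I4D E1D E2D E4D order_refl]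
  define A where "A \<omega> = (\<Sum>i<n. D i \<omega>)" for \<omega>
  have Am[measurable]: "A \<in> borel_measurable M"
    unfolding A_def by (intro borel_measurable_sum) (auto intro: Dm)
  have IA4: "integrable M (\<lambda>\<omega>. A \<omega> ^ 4)" using SM by (simp add: A_def[abs_def])
  have IA2: "integrable M (\<lambda>\<omega>. A \<omega> ^ 2)" by (rule integrable_pow_le[OF Am IA4]) simp
  have EA2: "expectation (\<lambda>\<omega>. A \<omega> ^ 2) = n * V" using SM by (simp add: A_def[abs_def])
  have EA4: "expectation (\<lambda>\<omega>. A \<omega> ^ 4) \<le> n * K + 3 * (real n)^2 * V^2" using SM by (simp add: A_def[abs_def])
  have npos: "real n > 0" using n by simp
  define T where "T \<omega> = (1 / real n) * (\<Sum>i<n. W i \<omega>)" for \<omega>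
  have TA: "T \<omega> - \<phi> = A \<omega> / n" for \<omega>
  proof -
    have "A \<omega> = (\<Sum>i<n. W i \<omega>) - n * \<phi>" by (simp add: A_def D_def sum_subtractf)
    then show ?thesis using npos by (simp add: T_def field_simps)
  qed
  define h where "h \<omega> = (A \<omega> / n)^2 - (A \<omega> / n)^4 / \<phi>^2" for \<omega>
  have Ih: "integrable M h"
    unfolding h_def using IA2 IA4 by (simp add: power_divide)
  have Eh: "expectation h = expectation (\<lambda>\<omega>. A \<omega> ^ 2) / n^2 - expectation (\<lambda>\<omega>. A \<omega> ^ 4) / (n^4 * \<phi>^2)"
    unfolding h_def using IA2 IA4 by (simp add: power_divide)
  have Tm[measurable]: "T \<in> borel_measurable M"
  proof -
    have "T = (\<lambda>\<omega>. A \<omega> / n + \<phi>)" using TA by (auto simp: fun_eq_iff algebra_simps)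
    then show ?thesis by simp
  qed
  define f where "f \<omega> = (max (T \<omega>) 0 - \<phi>)^2" for \<omega>
  have If: "integrable M f"
  proof (rule Bochner_Integration.integrable_bound)
    show "integrable M (\<lambda>\<omega>. 2 * (A \<omega> / n)^2 + 2 * \<phi>^2)" using IA2 by (simp add: power_divide)
    show "f \<in> borel_measurable M" unfolding f_def by measurable
    show "AE \<omega> in M. norm (f \<omega>) \<le> norm (2 * (A \<omega> / n)^2 + 2 * \<phi>^2)"
    proof (intro AE_I2)
      fix \<omega>
      have "\<bar>max (T \<omega>) 0 - \<phi>\<bar> \<le> \<bar>A \<omega> / n\<bar> + \<phi>" using TA[of \<omega>] phi by (auto simp: max_def abs_if)
      then have "(max (T \<omega>) 0 - \<phi>)^2 \<le> (\<bar>A \<omega> / n\<bar> + \<phi>)^2"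
        by (metis abs_ge_zero power2_abs power_mono)
      also have "\<dots> \<le> 2 * (A \<omega> / n)^2 + 2 * \<phi>^2"
        using sq_sum_le[of "\<bar>A \<omega> / n\<bar>" \<phi>] by (simp add: power_divide)
      finally show "norm (f \<omega>) \<le> norm (2 * (A \<omega> / n)^2 + 2 * \<phi>^2)" by (simp add: f_def)
    qed
  qed
  have "expectation h \<le> expectation f"
    by (rule integral_mono[OF Ih If]) (use max_sq_ineq[OF phi, of "T _"] TA in \<open>simp add: h_def f_def\<close>)
  moreover have "expectation h \<ge> V / n - (K + 3 * V^2) / (\<phi>^2 * real n ^ 2)"
  proof -
    have "expectation (\<lambda>\<omega>. A \<omega> ^ 4) / (n^4 * \<phi>^2) \<le> (n * K + 3 * (real n)^2 * V^2) / (n^4 * \<phi>^2)"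
      using EA4 phi npos by (intro divide_right_mono) auto
    also have "\<dots> \<le> (K + 3 * V^2) / (\<phi>^2 * real n ^ 2)"
    proof -
      have "(n * K + 3 * (real n)^2 * V^2) / (n^4 * \<phi>^2) = (K / n + 3 * V^2) / (\<phi>^2 * real n ^ 2)"
        using npos phi by (simp add: field_simps power2_eq_square power4_eq_xxxx)
      also have "\<dots> \<le> (K + 3 * V^2) / (\<phi>^2 * real n ^ 2)"
      proof -
        have "K * 1 \<le> K * real n" using K n by (intro mult_left_mono) auto
        then have "K / n \<le> K" using npos by (simp add: divide_le_eq)
        then show ?thesis using phi npos by (intro divide_right_mono) auto
      qed
      finally show ?thesis .
    qed
    finally have "expectation (\<lambda>\<omega>. A \<omega> ^ 4) / (n^4 * \<phi>^2) \<le> (K + 3 * V^2) / (\<phi>^2 * real n ^ 2)" .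
    moreover have "expectation (\<lambda>\<omega>. A \<omega> ^ 2) / n^2 = V / n" using EA2 npos by (simp add: power2_eq_square)
    ultimately show ?thesis using Eh by linarith
  qed
  moreover have "f = (\<lambda>\<omega>. (max ((1 / real n) * (\<Sum>i<n. W i \<omega>)) 0 - \<phi>)^2)"
    by (simp add: fun_eq_iff f_def T_def)
  ultimately show ?thesis by simp
qed

end



lemma pow4_bound: "((w::real) - p)^4 \<le> 8 * w^4 + 8 * p^4"
proof -
  have "(w - p)^2 \<le> 2 * w^2 + 2 * p^2" using sq_sum_le[of w "-p"] by simp
  then have "((w - p)^2)^2 \<le> (2 * w^2 + 2 * p^2)^2" by (intro power_mono) auto
  also have "\<dots> \<le> 2 * (2 * w^2)^2 + 2 * (2 * p^2)^2" by (rule sq_sum_le)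
  finally show ?thesis by (simp add: power_mult_distrib flip: power_mult)
qed

lemma prod4_bound: "((y::real) * z)^4 \<le> (y^8 + z^8) / 2"
proof -
  have "0 \<le> (y^4 - z^4)^2" by simp
  then have "2 * (y^4 * z^4) \<le> (y^4)^2 + (z^4)^2" by (simp add: power2_eq_square algebra_simps)
  then show ?thesis by (simp add: power_mult_distrib flip: power_mult)
qed

lemma W_moments:
  fixes S :: "real^'p^'p" and X :: "'a \<Rightarrow> real^'p" and j :: 'p
  assumes S: "pos_def_mat S" and P: "prob_space M"
    and D: "distributed M lborel X (\<lambda>x. ennreal (mvn_density S x))"
  defines "\<phi> \<equiv> phi_star S j" and "\<Sigma> \<equiv> S $ j $ j"
      and "b \<equiv> (\<chi> k. prec S $ k $ j / prec S $ j $ j)"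
  shows "integrable M (\<lambda>\<omega>. (X \<omega> $ j * (b \<bullet> X \<omega>) - \<phi>)^4) \<and>
         integral\<^sup>L M (\<lambda>\<omega>. X \<omega> $ j * (b \<bullet> X \<omega>) - \<phi>) = 0 \<and>
         integral\<^sup>L M (\<lambda>\<omega>. (X \<omega> $ j * (b \<bullet> X \<omega>) - \<phi>)^2) = \<phi>^2 + \<phi> * \<Sigma> \<and>
         integral\<^sup>L M (\<lambda>\<omega>. (X \<omega> $ j * (b \<bullet> X \<omega>) - \<phi>)^4) \<le> 420 * \<Sigma>^4 + 428 * \<phi>^4"
proof -
  interpret prob_space M by (rule P)
  define e where "e = axis j (1::real)"
  note VF = vec_facts[OF S, of j, folded e_def b_def, folded \<phi>_def \<Sigma>_def]
  have Xm[measurable]: "X \<in> borel_measurable M"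
    using distributed_measurable[OF D] by simp
  define Y where "Y \<omega> = e \<bullet> X \<omega>" for \<omega>
  define Z where "Z \<omega> = b \<bullet> X \<omega>" for \<omega>
  have Ym[measurable]: "Y \<in> borel_measurable M" unfolding Y_def by measurable
  have Zm[measurable]: "Z \<in> borel_measurable M" unfolding Z_def by measurable
  have Yj: "X \<omega> $ j = Y \<omega>" for \<omega> by (simp add: Y_def e_def inner_axis')
  note G = gauss_moment[OF S P D]
  have gY: "integrable M (\<lambda>\<omega>. Y \<omega> ^ (2*k)) \<and> integral\<^sup>L M (\<lambda>\<omega>. Y \<omega> ^ (2*k)) = fact (2*k) / (2^k * fact k) * \<Sigma>^k" for k
    using G[of e k] VF by (simp add: Y_def)
  have gZ: "integrable M (\<lambda>\<omega>. Z \<omega> ^ (2*k)) \<and> integral\<^sup>L M (\<lambda>\<omega>. Z \<omega> ^ (2*k)) = fact (2*k) / (2^k * fact k) * \<phi>^k" for k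
    using G[of b k] VF by (simp add: Z_def)
  have gP: "integrable M (\<lambda>\<omega>. (Y \<omega> + Z \<omega>) ^ (2*k)) \<and> integral\<^sup>L M (\<lambda>\<omega>. (Y \<omega> + Z \<omega>) ^ (2*k)) = fact (2*k) / (2^k * fact k) * (\<Sigma> + 3 * \<phi>)^k" for k
    using G[of "e + b" k] VF by (simp add: Y_def Z_def inner_add_left)
  have gM: "integrable M (\<lambda>\<omega>. (Y \<omega> - Z \<omega>) ^ (2*k)) \<and> integral\<^sup>L M (\<lambda>\<omega>. (Y \<omega> - Z \<omega>) ^ (2*k)) = fact (2*k) / (2^k * fact k) * (\<Sigma> - \<phi>)^k" for k
    using G[of "e - b" k] VF by (simp add: Y_def Z_def inner_diff_left)
  from gY[of 1] gY[of 2] gY[of 4] have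
    Y2: "integrable M (\<lambda>\<omega>. Y \<omega> ^ 2)" "integral\<^sup>L M (\<lambda>\<omega>. Y \<omega> ^ 2) = \<Sigma>" and
    Y4: "integrable M (\<lambda>\<omega>. Y \<omega> ^ 4)" "integral\<^sup>L M (\<lambda>\<omega>. Y \<omega> ^ 4) = 3 * \<Sigma>^2" and
    Y8: "integrable M (\<lambda>\<omega>. Y \<omega> ^ 8)" "integral\<^sup>L M (\<lambda>\<omega>. Y \<omega> ^ 8) = 105 * \<Sigma>^4"
    by (simp_all add: fact_numeral)
  from gZ[of 1] gZ[of 2] gZ[of 4] have
    Z2: "integrable M (\<lambda>\<omega>. Z \<omega> ^ 2)" "integral\<^sup>L M (\<lambda>\<omega>. Z \<omega> ^ 2) = \<phi>" and
    Z4: "integrable M (\<lambda>\<omega>. Z \<omega> ^ 4)" "integral\<^sup>L M (\<lambda>\<omega>. Z \<omega> ^ 4) = 3 * \<phi>^2" and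
    Z8: "integrable M (\<lambda>\<omega>. Z \<omega> ^ 8)" "integral\<^sup>L M (\<lambda>\<omega>. Z \<omega> ^ 8) = 105 * \<phi>^4"
    by (simp_all add: fact_numeral)
  from gP[of 1] gP[of 2] have
    P2: "integrable M (\<lambda>\<omega>. (Y \<omega> + Z \<omega>) ^ 2)" "integral\<^sup>L M (\<lambda>\<omega>. (Y \<omega> + Z \<omega>) ^ 2) = \<Sigma> + 3 * \<phi>" and
    P4: "integrable M (\<lambda>\<omega>. (Y \<omega> + Z \<omega>) ^ 4)" "integral\<^sup>L M (\<lambda>\<omega>. (Y \<omega> + Z \<omega>) ^ 4) = 3 * (\<Sigma> + 3 * \<phi>)^2"
    by (simp_all add: fact_numeral)
  from gM[of 1] gM[of 2] have
    M2: "integrable M (\<lambda>\<omega>. (Y \<omega> - Z \<omega>) ^ 2)" "integral\<^sup>L M (\<lambda>\<omega>. (Y \<omega> - Z \<omega>) ^ 2) = \<Sigma> - \<phi>" and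
    M4: "integrable M (\<lambda>\<omega>. (Y \<omega> - Z \<omega>) ^ 4)" "integral\<^sup>L M (\<lambda>\<omega>. (Y \<omega> - Z \<omega>) ^ 4) = 3 * (\<Sigma> - \<phi>)^2"
    by (simp_all add: fact_numeral)
  define W where "W \<omega> = Y \<omega> * Z \<omega>" for \<omega>
  have W1: "W \<omega> = ((Y \<omega> + Z \<omega>)^2 - (Y \<omega> - Z \<omega>)^2) / 4" for \<omega>
    by (simp add: W_def power2_eq_square algebra_simps)
  have W2: "W \<omega> ^ 2 = ((Y \<omega> + Z \<omega>)^4 + (Y \<omega> - Z \<omega>)^4 - 2 * Y \<omega> ^ 4 - 2 * Z \<omega> ^ 4) / 12" for \<omega>
    by (simp add: W_def power2_eq_square power4_eq_xxxx algebra_simps)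
  have IW: "integrable M W" unfolding W1 using P2 M2 by simp
  have EW: "integral\<^sup>L M W = \<phi>" unfolding W1 using P2 M2 by simp
  have IW2: "integrable M (\<lambda>\<omega>. W \<omega> ^ 2)" unfolding W2 using P4 M4 Y4 Z4 by simp
  have EW2: "integral\<^sup>L M (\<lambda>\<omega>. W \<omega> ^ 2) = 2 * \<phi>^2 + \<phi> * \<Sigma>"
    unfolding W2 using P4 M4 Y4 Z4 by (simp add: power2_eq_square algebra_simps)
  have Wm[measurable]: "W \<in> borel_measurable M" unfolding W_def by measurable
  have WX: "X \<omega> $ j * (b \<bullet> X \<omega>) = W \<omega>" for \<omega> by (simp add: W_def Yj Z_def)
  have bnd: "\<bar>(W \<omega> - \<phi>)^4\<bar> \<le> 4 * Y \<omega> ^ 8 + 4 * Z \<omega> ^ 8 + 8 * \<phi>^4" for \<omega>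
  proof -
    have a: "(W \<omega> - \<phi>)^4 \<le> 8 * W \<omega> ^4 + 8 * \<phi>^4" by (rule pow4_bound)
    have b: "W \<omega> ^ 4 \<le> (Y \<omega> ^ 8 + Z \<omega> ^ 8) / 2" unfolding W_def by (rule prod4_bound)
    from b have "8 * W \<omega> ^ 4 \<le> 4 * Y \<omega> ^ 8 + 4 * Z \<omega> ^ 8" by simp
    with a have "(W \<omega> - \<phi>)^4 \<le> 4 * Y \<omega> ^ 8 + 4 * Z \<omega> ^ 8 + 8 * \<phi>^4" by (smt (verit))
    moreover have "(W \<omega> - \<phi>)^4 \<ge> 0" by (simp add: zero_le_even_power)
    ultimately show ?thesis by simp
  qed
  have Ibnd: "integrable M (\<lambda>\<omega>. 4 * Y \<omega> ^ 8 + 4 * Z \<omega> ^ 8 + 8 * \<phi>^4)" using Y8 Z8 by simp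
  have I4: "integrable M (\<lambda>\<omega>. (W \<omega> - \<phi>)^4)"
  proof (rule Bochner_Integration.integrable_bound[OF Ibnd])
    show "(\<lambda>\<omega>. (W \<omega> - \<phi>)^4) \<in> borel_measurable M" by measurable
    show "AE \<omega> in M. norm ((W \<omega> - \<phi>)^4) \<le> norm (4 * Y \<omega> ^ 8 + 4 * Z \<omega> ^ 8 + 8 * \<phi>^4)"
      using bnd by (intro AE_I2) (simp add: zero_le_even_power)
  qed
  have E4: "integral\<^sup>L M (\<lambda>\<omega>. (W \<omega> - \<phi>)^4) \<le> 420 * \<Sigma>^4 + 428 * \<phi>^4"
  proof -
    have "integral\<^sup>L M (\<lambda>\<omega>. (W \<omega> - \<phi>)^4) \<le> integral\<^sup>L M (\<lambda>\<omega>. 4 * Y \<omega> ^ 8 + 4 * Z \<omega> ^ 8 + 8 * \<phi>^4)"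
      using bnd by (intro integral_mono[OF I4 Ibnd]) (simp add: abs_le_iff)
    also have "\<dots> = 420 * \<Sigma>^4 + 428 * \<phi>^4" using Y8 Z8 by (simp add: prob_space)
    finally show ?thesis .
  qed
  have E1: "integral\<^sup>L M (\<lambda>\<omega>. W \<omega> - \<phi>) = 0" using IW EW by (simp add: prob_space)
  have E2: "integral\<^sup>L M (\<lambda>\<omega>. (W \<omega> - \<phi>)^2) = \<phi>^2 + \<phi> * \<Sigma>"
  proof -
    have "(\<lambda>\<omega>. (W \<omega> - \<phi>)^2) = (\<lambda>\<omega>. W \<omega> ^ 2 - 2 * \<phi> * W \<omega> + \<phi>^2)"
      by (simp add: fun_eq_iff power2_eq_square algebra_simps)
    then show ?thesis using IW IW2 EW EW2 by (simp add: power2_eq_square prob_space)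
  qed
  show ?thesis unfolding WX using I4 E1 E2 E4 by simp
qed



lemma phi_RML_eq:
  fixes S :: "real^'p^'p" and x :: "nat \<Rightarrow> real^'p" and j :: 'p
  defines "b \<equiv> (\<chi> k. prec S $ k $ j / prec S $ j $ j)"
  shows "phi_RML S n x j = max ((1 / real n) * (\<Sum>i<n. x i $ j * (b \<bullet> x i))) 0"
proof -
  have "(sample_cov n x ** B_star S) $ j $ j = (\<Sum>k\<in>UNIV. ((1 / real n) * (\<Sum>i<n. x i $ j * x i $ k)) * b $ k)"
    by (simp add: matrix_matrix_mult_def sample_cov_def B_star_def b_def sum_component)
  also have "\<dots> = (1 / real n) * (\<Sum>i<n. \<Sum>k\<in>UNIV. x i $ j * (x i $ k * b $ k))"
    by (subst sum.swap) (simp add: sum_distrib_left sum_distrib_right mult_ac)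
  also have "\<dots> = (1 / real n) * (\<Sum>i<n. x i $ j * (b \<bullet> x i))"
    by (simp add: inner_vec_def sum_distrib_left mult_ac)
  finally show ?thesis by (simp add: phi_RML_def)
qed

theorem proposition2:
  assumes "CARD('p) \<ge> 2"
  shows "\<exists>g :: real \<Rightarrow> real \<Rightarrow> real.
    \<forall>(S :: real^'p^'p) (j :: 'p) (n :: nat) (M :: 'a measure) (X :: nat \<Rightarrow> 'a \<Rightarrow> real^'p).
      pos_def_mat S \<and> n \<ge> 1 \<and> prob_space M \<and>
      prob_space.indep_vars M (\<lambda>_. borel) X {..<n} \<and>
      (\<forall>i<n. distributed M lborel (X i) (\<lambda>x. ennreal (mvn_density S x)))
      \<longrightarrow>
      prob_space.expectation M (\<lambda>\<omega>. (phi_RML S n (\<lambda>i. X i \<omega>) j - phi_star S j)\<^sup>2)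
        \<ge> ((phi_star S j)\<^sup>2 + phi_star S j * S $ j $ j) / real n
           - g (phi_star S j) (S $ j $ j) / real n powr (3/2)"
proof (intro exI[of _ "\<lambda>\<phi> \<Sigma>. (420 * \<Sigma>^4 + 428 * \<phi>^4 + 3 * (\<phi>^2 + \<phi> * \<Sigma>)^2) / \<phi>^2"] allI impI, elim conjE)
  fix S :: "real^'p^'p" and j :: 'p and n :: nat and M :: "'a measure" and X :: "nat \<Rightarrow> 'a \<Rightarrow> real^'p"
  assume S: "pos_def_mat S" and n: "n \<ge> 1" and P: "prob_space M"
    and indX: "prob_space.indep_vars M (\<lambda>_. borel) X {..<n}"
    and D: "\<forall>i<n. distributed M lborel (X i) (\<lambda>x. ennreal (mvn_density S x))"
  interpret prob_space M by (rule P)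
  define \<phi> where "\<phi> = phi_star S j"
  define \<Sigma> where "\<Sigma> = S $ j $ j"
  define b where "b = (\<chi> k. prec S $ k $ j / prec S $ j $ j)"
  define V where "V = \<phi>^2 + \<phi> * \<Sigma>"
  define K where "K = 420 * \<Sigma>^4 + 428 * \<phi>^4"
  define W where "W i \<omega> = X i \<omega> $ j * (b \<bullet> X i \<omega>)" for i \<omega>
  have phi: "\<phi> > 0" using vec_facts(1,2)[OF S, of j] by (simp add: \<phi>_def)
  have Kpos: "K \<ge> 0" by (simp add: K_def zero_le_even_power)
  have indW: "indep_vars (\<lambda>_. borel) W {..<n}"
    unfolding W_def by (rule indep_vars_compose2[OF indX]) measurable
  note WM = W_moments[OF S P, of "X i" j for i, folded \<phi>_def \<Sigma>_def b_def]
  have fb: "expectation (\<lambda>\<omega>. (max ((1 / real n) * (\<Sum>i<n. W i \<omega>)) 0 - \<phi>)^2)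
      \<ge> V / n - (K + 3 * V^2) / (\<phi>^2 * real n ^ 2)"
    by (rule final_bound[OF indW n phi Kpos]) (use WM D in \<open>simp_all add: W_def V_def K_def\<close>)
  have eq: "(\<lambda>\<omega>. (phi_RML S n (\<lambda>i. X i \<omega>) j - phi_star S j)\<^sup>2)
      = (\<lambda>\<omega>. (max ((1 / real n) * (\<Sum>i<n. W i \<omega>)) 0 - \<phi>)^2)"
    by (simp add: fun_eq_iff phi_RML_eq W_def b_def \<phi>_def)
  define C where "C = (K + 3 * V^2) / \<phi>^2"
  have C0: "C \<ge> 0" using Kpos by (simp add: C_def)
  have npos: "real n > 0" using n by simp
  have "(K + 3 * V^2) / (\<phi>^2 * real n ^ 2) = C / real n ^ 2" by (simp add: C_def)
  also have "\<dots> \<le> C / real n powr (3/2)"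
  proof (rule divide_left_mono[OF _ C0])
    have "real n powr (3/2) \<le> real n powr 2" using n by (intro powr_mono) auto
    also have "\<dots> = real n ^ 2" using npos by (simp add: powr_realpow)
    finally show "real n powr (3/2) \<le> real n ^ 2" .
    show "0 < real n ^ 2 * real n powr (3/2)" using npos by simp
  qed
  finally have "(K + 3 * V^2) / (\<phi>^2 * real n ^ 2) \<le> C / real n powr (3/2)" .
  then show "((phi_star S j)\<^sup>2 + phi_star S j * S $ j $ j) / real n
           - (\<lambda>\<phi> \<Sigma>. (420 * \<Sigma>^4 + 428 * \<phi>^4 + 3 * (\<phi>^2 + \<phi> * \<Sigma>)^2) / \<phi>^2) (phi_star S j) (S $ j $ j) / real n powr (3/2)
        \<le> expectation (\<lambda>\<omega>. (phi_RML S n (\<lambda>i. X i \<omega>) j - phi_star S j)\<^sup>2)"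
    unfolding eq using fb by (simp add: C_def K_def V_def \<phi>_def \<Sigma>_def)
qed


end
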